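(* Let $k\ge1$, $j\ge0$, $n=k+j$ and $N\in\mathcal{OC}_{k,j}$. Then $$\sum_{\{e',e''\}\subseteq \mathrm{ToT}(N),\ e'\neq e''}A_C(N(e',e''))=(2n^2+n-2)A_C(N)-(2n-1),$$ where the sum ranges over unordered pairs of distinct edges of $\mathrm{ToT}(N)$.
   Context: A (planted, binary) phylogenetic network on a taxon set $X$ with $|X|=n$ is a finite acyclic directed graph with: - a unique root $\rho$ of indegree 0 and outdegree 1; - exactly $n$ nodes of indegree 1 and outdegree 0 (leaves), labeled bijectively by $X$; - every other node is either a tree node (indegree 1, outdegree 2) or a reticulation node (indegree 2, outdegree 1). An edge $(p,q)$ is a tree edge if $q$ is a tree node or a leaf. A network is simplex if the child of every reticulation node is a leaf. A node $u$ is an ancestor of a node $v\neq u$ if some directed path from $\rho$ to $v$ passes through $u$. The ancestor number $\alpha_N(v)$ is the number of ancestors of $v$. The top tree component $C(N)$ of a simplex network $N$ is the set of tree nodes and leaves not descending from any reticulation node. Define $A_C(N)=\sum_{v\in C(N)}\alpha_N(v)$. $\mathrm{ToT}(N)$ is the set of tree edges $(u,v)$ of $N$ with $u$ not a reticulation node, i.e. the tree edges of the top tree component. For $k\ge1$, $j\ge0$, $\mathcal{OC}_{k,j}$ is the set of simplex networks on taxa $\{1,\dots,k+j\}$ with exactly $j$ reticulation nodes, whose children are the leaves $k+1,\dots,k+j$. For $N\in\mathcal{OC}_{k,j}$ and distinct $e'=(u,v)$, $e''=(s,t)$ in $\mathrm{ToT}(N)$, the network $N(e',e'')$ is obtained from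 $N$ as follows: - subdivide $e'$ into $(u,p),(p,v)$ and $e''$ into $(s,q),(q,t)$, with new nodes $p,q$; - add a new reticulation node $r$ with edges $(p,r),(q,r)$; - add a new leaf labeled $n+1$ with edge $(r,n+1)$. *)

theory Defs
  imports Main
begin

record 'v network =
  nodes :: "'v set"
  edges :: "('v \<times> 'v) set"
  label :: "'v \<Rightarrow> nat"

definition indeg :: "('v, 'b) network_scheme \<Rightarrow> 'v \<Rightarrow> nat" where
  "indeg N v = card {u. (u, v) \<in> edges N}"

definition outdeg :: "('v, 'b) network_scheme \<Rightarrow> 'v \<Rightarrow> nat" where
  "outdeg N v = card {w. (v, w) \<in> edges N}"

definition is_root :: "('v, 'b) network_scheme \<Rightarrow> 'v \<Rightarrow> bool" where
  "is_root N v \<longleftrightarrow> v \<in> nodes N \<and> indeg N v = 0 \<and> outdeg N v = 1"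

definition is_leaf :: "('v, 'b) network_scheme \<Rightarrow> 'v \<Rightarrow> bool" where
  "is_leaf N v \<longleftrightarrow> v \<in> nodes N \<and> indeg N v = 1 \<and> outdeg N v = 0"

definition is_tree_node :: "('v, 'b) network_scheme \<Rightarrow> 'v \<Rightarrow> bool" where
  "is_tree_node N v \<longleftrightarrow> v \<in> nodes N \<and> indeg N v = 1 \<and> outdeg N v = 2"

definition is_ret :: "('v, 'b) network_scheme \<Rightarrow> 'v \<Rightarrow> bool" where
  "is_ret N v \<longleftrightarrow> v \<in> nodes N \<and> indeg N v = 2 \<and> outdeg N v = 1"

definition leaves :: "('v, 'b) network_scheme \<Rightarrow> 'v set" where
  "leaves N = {v. is_leaf N v}"

definition phylo_network :: "('v, 'b) network_scheme \<Rightarrow> nat set \<Rightarrow> bool" where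
  "phylo_network N X \<longleftrightarrow>
     finite (nodes N) \<and>
     edges N \<subseteq> nodes N \<times> nodes N \<and>
     acyclic (edges N) \<and>
     (\<exists>!\<rho>. is_root N \<rho>) \<and>
     (\<forall>v \<in> nodes N. is_root N v \<or> is_leaf N v \<or> is_tree_node N v \<or> is_ret N v) \<and>
     bij_betw (label N) (leaves N) X"

definition root_of :: "('v, 'b) network_scheme \<Rightarrow> 'v" where
  "root_of N = (THE \<rho>. is_root N \<rho>)"

definition simplex :: "('v, 'b) network_scheme \<Rightarrow> bool" where
  "simplex N \<longleftrightarrow> (\<forall>r c. is_ret N r \<and> (r, c) \<in> edges N \<longrightarrow> is_leaf N c)"

definition ancestor :: "('v, 'b) network_scheme \<Rightarrow> 'v \<Rightarrow> 'v \<Rightarrow> bool" where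
  "ancestor N u v \<longleftrightarrow> u \<noteq> v \<and> (root_of N, u) \<in> (edges N)\<^sup>* \<and> (u, v) \<in> (edges N)\<^sup>*"

definition anc_num :: "('v, 'b) network_scheme \<Rightarrow> 'v \<Rightarrow> nat" where
  "anc_num N v = card {u. ancestor N u v}"

definition top_comp :: "('v, 'b) network_scheme \<Rightarrow> 'v set" where
  "top_comp N = {v \<in> nodes N. (is_tree_node N v \<or> is_leaf N v) \<and>
                  \<not> (\<exists>r. is_ret N r \<and> (r, v) \<in> (edges N)\<^sup>+)}"

definition A_C :: "('v, 'b) network_scheme \<Rightarrow> nat" where
  "A_C N = (\<Sum>v \<in> top_comp N. anc_num N v)"

definition tree_edge :: "('v, 'b) network_scheme \<Rightarrow> 'v \<times> 'v \<Rightarrow> bool" where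
  "tree_edge N e \<longleftrightarrow> e \<in> edges N \<and> (is_tree_node N (snd e) \<or> is_leaf N (snd e))"

definition ToT :: "('v, 'b) network_scheme \<Rightarrow> ('v \<times> 'v) set" where
  "ToT N = {e. tree_edge N e \<and> \<not> is_ret N (fst e)}"

definition OC :: "nat \<Rightarrow> nat \<Rightarrow> ('v, 'b) network_scheme \<Rightarrow> bool" where
  "OC k j N \<longleftrightarrow> phylo_network N {1..k+j} \<and> simplex N \<and>
     card {r. is_ret N r} = j \<and>
     label N ` {c. \<exists>r. is_ret N r \<and> (r, c) \<in> edges N} = {k+1..k+j}"

text \<open>Nodes of N(e',e''): old nodes, the subdivision node of each chosen edge
  (p for e', q for e''), the new reticulation r, and the new leaf.\<close>
datatype 'v ext = Old 'v | Sub "'v \<times> 'v" | Ret | NewLeaf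

definition ins_ret_set :: "'v network \<Rightarrow> ('v \<times> 'v) set \<Rightarrow> 'v ext network" where
  "ins_ret_set N P =
    \<lparr> nodes = Old ` nodes N \<union> Sub ` P \<union> {Ret, NewLeaf},
      edges = map_prod Old Old ` (edges N - P)
              \<union> (\<Union>(u, v) \<in> P. {(Old u, Sub (u, v)), (Sub (u, v), Old v), (Sub (u, v), Ret)})
              \<union> {(Ret, NewLeaf)},
      label = (\<lambda>x. case x of Old y \<Rightarrow> label N y
                           | NewLeaf \<Rightarrow> card (leaves N) + 1
                           | _ \<Rightarrow> 0) \<rparr>"

definition ins_ret :: "'v network \<Rightarrow> 'v \<times> 'v \<Rightarrow> 'v \<times> 'v \<Rightarrow> 'v ext network" where
  "ins_ret N e' e'' = ins_ret_set N {e', e''}"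

end

theory Submission
  imports Defs
begin


locale net =
  fixes N :: "'v network" and X :: "nat set"
  assumes phylo: "phylo_network N X" and simpl: "simplex N"
begin

abbreviation "E \<equiv> edges N"
abbreviation "V \<equiv> nodes N"
abbreviation "C \<equiv> top_comp N"
abbreviation "T \<equiv> ToT N"
abbreviation "\<rho> \<equiv> root_of N"

lemma finV: "finite V" using phylo by (simp add: phylo_network_def)
lemma EV: "E \<subseteq> V \<times> V" using phylo by (simp add: phylo_network_def)
lemma finE: "finite E" using finV EV finite_subset by (metis finite_SigmaI)
lemma acyc: "acyclic E" using phylo by (simp add: phylo_network_def)
lemma EV1: "(u,v) \<in> E \<Longrightarrow> u \<in> V" using EV by blast
lemma EV2: "(u,v) \<in> E \<Longrightarrow> v \<in> V" using EV by blast

lemma root: "is_root N \<rho>"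
proof -
  have "\<exists>!r. is_root N r" using phylo by (simp add: phylo_network_def)
  then show ?thesis unfolding root_of_def by (rule theI')
qed

lemma root_unique: "is_root N x \<Longrightarrow> x = \<rho>"
proof -
  assume a: "is_root N x"
  have "\<exists>!r. is_root N r" using phylo by (simp add: phylo_network_def)
  then show ?thesis using a root by blast
qed

lemma classify: "v \<in> V \<Longrightarrow> is_root N v \<or> is_leaf N v \<or> is_tree_node N v \<or> is_ret N v"
  using phylo by (simp add: phylo_network_def)

lemma fin_pred: "finite {u. (u,v) \<in> E}"
proof -
  have "{u. (u,v) \<in> E} \<subseteq> fst ` E" by force
  then show ?thesis using finE finite_subset by blast
qed

lemma fin_succ: "finite {w. (v,w) \<in> E}"
proof -
  have "{w. (v,w) \<in> E} \<subseteq> snd ` E" by force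
  then show ?thesis using finE finite_subset by blast
qed

lemma in_pos: "(u,v) \<in> E \<Longrightarrow> indeg N v \<noteq> 0"
  unfolding indeg_def using fin_pred[of v] by auto

lemma out_pos: "(u,v) \<in> E \<Longrightarrow> outdeg N u \<noteq> 0"
  unfolding outdeg_def using fin_succ[of u] by auto

lemma leaf_noout: "is_leaf N u \<Longrightarrow> (u,v) \<notin> E"
  unfolding is_leaf_def by (metis out_pos)

lemma root_noin: "is_root N v \<Longrightarrow> (u,v) \<notin> E"
  unfolding is_root_def by (metis in_pos)

lemma indeg1_unique: "indeg N v = 1 \<Longrightarrow> (u,v) \<in> E \<Longrightarrow> (w,v) \<in> E \<Longrightarrow> u = w"
  unfolding indeg_def by (metis (mono_tags, lifting) card_1_singletonE mem_Collect_eq singletonD)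

lemma treeleaf_unique: "is_tree_node N v \<or> is_leaf N v \<Longrightarrow> (u,v) \<in> E \<Longrightarrow> (w,v) \<in> E \<Longrightarrow> u = w"
  using indeg1_unique unfolding is_tree_node_def is_leaf_def by blast

lemma rt_V: "(u,v) \<in> E\<^sup>* \<Longrightarrow> v \<in> V \<Longrightarrow> u \<in> V"
  by (erule converse_rtranclE) (auto dest: EV1)

lemma notroot_in: "v \<in> V \<Longrightarrow> v \<noteq> \<rho> \<Longrightarrow> \<exists>u. (u,v) \<in> E"
proof -
  assume v: "v \<in> V" "v \<noteq> \<rho>"
  then have "\<not> is_root N v" using root_unique by blast
  then have "indeg N v \<noteq> 0" using classify[OF v(1)]
    unfolding is_root_def is_leaf_def is_tree_node_def is_ret_def by auto
  then have "{u. (u,v) \<in> E} \<noteq> {}" unfolding indeg_def by (metis card.empty)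
  then show ?thesis by blast
qed

lemma root_reach: "v \<in> V \<Longrightarrow> (\<rho>, v) \<in> E\<^sup>*"
proof (induction v rule: wf_induct_rule[OF finite_acyclic_wf[OF finE acyc]])
  case (1 v)
  show ?case
  proof (cases "v = \<rho>")
    case True then show ?thesis by simp
  next
    case False
    then obtain u where u: "(u,v) \<in> E" using notroot_in 1 by blast
    then have "(\<rho>, u) \<in> E\<^sup>*" using 1 EV1 by blast
    then show ?thesis using u by (meson rtrancl.rtrancl_into_rtrancl)
  qed
qed

lemma no_self: "(u,v) \<in> E \<Longrightarrow> (v,u) \<notin> E\<^sup>*"
  using acyc unfolding acyclic_def by (meson rtrancl_into_trancl2)

lemma ret_below: "is_ret N r \<Longrightarrow> (r,x) \<in> E\<^sup>+ \<Longrightarrow> (r,x) \<in> E \<and> is_leaf N x"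
proof -
  assume r: "is_ret N r" and rx: "(r,x) \<in> E\<^sup>+"
  obtain z where z: "(r,z) \<in> E" "(z,x) \<in> E\<^sup>*" using tranclD[OF rx] by blast
  have zl: "is_leaf N z" using simpl r z(1) unfolding simplex_def by blast
  have "z = x" using z(2) zl leaf_noout by (metis converse_rtranclE)
  then show ?thesis using z zl by simp
qed

lemma leaf_not_tree: "is_leaf N v \<Longrightarrow> \<not> is_tree_node N v"
  unfolding is_leaf_def is_tree_node_def by simp

lemma tree_in_C: "is_tree_node N v \<Longrightarrow> v \<in> C"
proof -
  assume t: "is_tree_node N v"
  have "\<not> (\<exists>r. is_ret N r \<and> (r, v) \<in> E\<^sup>+)"
  proof
    assume "\<exists>r. is_ret N r \<and> (r, v) \<in> E\<^sup>+"
    then obtain r where "is_ret N r" "(r, v) \<in> E\<^sup>+" by blast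
    then have "is_leaf N v" using ret_below by blast
    then show False using t leaf_not_tree by blast
  qed
  moreover have "v \<in> V" using t unfolding is_tree_node_def by simp
  ultimately show ?thesis using t unfolding top_comp_def by simp
qed

lemma C_V: "v \<in> C \<Longrightarrow> v \<in> V" unfolding top_comp_def by simp

lemma C_treeleaf: "v \<in> C \<Longrightarrow> is_tree_node N v \<or> is_leaf N v" unfolding top_comp_def by simp

lemma root_notC: "\<rho> \<notin> C"
  using root unfolding top_comp_def is_root_def is_tree_node_def is_leaf_def by auto

lemma C_noret: "v \<in> C \<Longrightarrow> is_ret N r \<Longrightarrow> (r,v) \<notin> E\<^sup>+" unfolding top_comp_def by simp

lemma anc_eq: "v \<in> V \<Longrightarrow> ancestor N u v \<longleftrightarrow> u \<noteq> v \<and> (u,v) \<in> E\<^sup>*"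
proof -
  assume v: "v \<in> V"
  show ?thesis
  proof
    assume "ancestor N u v" then show "u \<noteq> v \<and> (u,v) \<in> E\<^sup>*" unfolding ancestor_def by simp
  next
    assume a: "u \<noteq> v \<and> (u,v) \<in> E\<^sup>*"
    then have "u \<in> V" using rt_V v by blast
    then have "(\<rho>, u) \<in> E\<^sup>*" by (rule root_reach)
    then show "ancestor N u v" using a unfolding ancestor_def by simp
  qed
qed

lemma anc_num_eq: "v \<in> V \<Longrightarrow> anc_num N v = card {u. u \<noteq> v \<and> (u,v) \<in> E\<^sup>*}"
  unfolding anc_num_def using anc_eq by simp

lemma fin_anc: "v \<in> V \<Longrightarrow> finite {u. P u \<and> (u,v) \<in> E\<^sup>*}"
proof -
  assume v: "v \<in> V"
  have "{u. P u \<and> (u,v) \<in> E\<^sup>*} \<subseteq> V" using rt_V[OF _ v] by blast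
  then show ?thesis using finV finite_subset by blast
qed

lemma F2: "w \<in> C \<Longrightarrow> card {v \<in> C. (v,w) \<in> E\<^sup>*} = anc_num N w"
proof -
  assume w: "w \<in> C"
  have wV: "w \<in> V" using C_V w by simp
  let ?S = "{u. u \<noteq> w \<and> (u,w) \<in> E\<^sup>*}"
  have wr: "w \<noteq> \<rho>" using w root_notC by blast
  have rS: "\<rho> \<in> ?S" using wr root_reach wV by simp
  have eq: "{v \<in> C. (v,w) \<in> E\<^sup>*} = insert w (?S - {\<rho>})"
  proof (rule set_eqI, rule iffI)
    fix x assume "x \<in> {v \<in> C. (v,w) \<in> E\<^sup>*}"
    then show "x \<in> insert w (?S - {\<rho>})" using root_notC by auto
  next
    fix x assume x: "x \<in> insert w (?S - {\<rho>})"
    show "x \<in> {v \<in> C. (v,w) \<in> E\<^sup>*}"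
    proof (cases "x = w")
      case True then show ?thesis using w by simp
    next
      case False
      then have xw: "(x,w) \<in> E\<^sup>+" "x \<noteq> \<rho>" using x by (auto simp: rtrancl_eq_or_trancl)
      have xV: "x \<in> V" using x rt_V wV by blast
      obtain z where z: "(x,z) \<in> E" using tranclD[OF xw(1)] by blast
      have "\<not> is_leaf N x" using z leaf_noout by blast
      moreover have "\<not> is_root N x" using xw(2) root_unique by blast
      moreover have "\<not> is_ret N x" using C_noret[OF w] xw(1) by blast
      ultimately have "is_tree_node N x" using classify[OF xV] by blast
      then show ?thesis using tree_in_C xw(1) by auto
    qed
  qed
  have fin: "finite ?S" using fin_anc[OF wV] by simp
  have "w \<notin> ?S - {\<rho>}" by simp
  then have "card {v \<in> C. (v,w) \<in> E\<^sup>*} = card (?S - {\<rho>}) + 1" using eq fin by simp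
  also have "\<dots> = card ?S"
  proof -
    have "card ?S > 0" using fin rS card_gt_0_iff by blast
    then show ?thesis using card_Diff_singleton[OF rS] by simp
  qed
  finally show ?thesis using anc_num_eq[OF wV] by simp
qed


lemma T_iff: "a \<in> T \<longleftrightarrow> a \<in> E \<and> (is_tree_node N (snd a) \<or> is_leaf N (snd a)) \<and> \<not> is_ret N (fst a)"
  unfolding ToT_def tree_edge_def by simp

lemma T_E: "a \<in> T \<Longrightarrow> a \<in> E" unfolding ToT_def tree_edge_def by simp

lemma T_sub: "T \<subseteq> E" using T_E by blast
lemma finT: "finite T" using finite_subset[OF T_sub finE] .

lemma snd_T_C: "a \<in> T \<Longrightarrow> snd a \<in> C"
proof -
  assume a: "a \<in> T"
  obtain x y where xy: "a = (x,y)" by (cases a)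
  have e: "(x,y) \<in> E" and tl: "is_tree_node N y \<or> is_leaf N y" and nr: "\<not> is_ret N x"
    using a xy T_iff by auto
  have "\<not> (\<exists>r. is_ret N r \<and> (r, y) \<in> E\<^sup>+)"
  proof
    assume "\<exists>r. is_ret N r \<and> (r, y) \<in> E\<^sup>+"
    then obtain r where r: "is_ret N r" "(r, y) \<in> E\<^sup>+" by blast
    then have "(r,y) \<in> E" using ret_below by blast
    then have "r = x" using treeleaf_unique[OF tl] e by blast
    then show False using r nr by simp
  qed
  then show ?thesis using xy tl EV2[OF e] unfolding top_comp_def by simp
qed

lemma inj_snd_T: "inj_on snd T"
proof
  fix a b assume a: "a \<in> T" and b: "b \<in> T" and s: "snd a = snd b"
  have ea: "(fst a, snd a) \<in> E" using a T_iff by simp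
  have eb: "(fst b, snd a) \<in> E" using b T_iff s by simp
  have tl: "is_tree_node N (snd a) \<or> is_leaf N (snd a)" using a T_iff by simp
  have "fst a = fst b" using treeleaf_unique[OF tl ea eb] .
  then show "a = b" using s by (simp add: prod_eq_iff)
qed

lemma C_parent: "v \<in> C \<Longrightarrow> \<exists>a \<in> T. snd a = v"
proof -
  assume v: "v \<in> C"
  have vV: "v \<in> V" using C_V v by simp
  have tl: "is_tree_node N v \<or> is_leaf N v" using C_treeleaf v by simp
  have "v \<noteq> \<rho>" using v root_notC by blast
  then obtain u where u: "(u,v) \<in> E" using notroot_in vV by blast
  have "\<not> is_ret N u" using C_noret[OF v] u by blast
  then have "(u,v) \<in> T" using T_iff u tl by simp
  then show ?thesis by force
qed

lemma bij_snd: "bij_betw snd T C"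
  unfolding bij_betw_def using inj_snd_T snd_T_C C_parent by blast

lemma C_sub: "C \<subseteq> V" using C_V by blast
lemma finC: "finite C" using finite_subset[OF C_sub finV] .

lemma F3: "a \<in> T \<Longrightarrow> anc_num N (snd a) = card {u. (u, fst a) \<in> E\<^sup>*}"
proof -
  assume a: "a \<in> T"
  obtain x y where xy: "a = (x,y)" by (cases a)
  have e: "(x,y) \<in> E" and tl: "is_tree_node N y \<or> is_leaf N y"
    using a xy T_iff by auto
  have "{u. u \<noteq> y \<and> (u,y) \<in> E\<^sup>*} = {u. (u, x) \<in> E\<^sup>*}"
  proof (rule set_eqI, rule iffI)
    fix u assume "u \<in> {u. u \<noteq> y \<and> (u,y) \<in> E\<^sup>*}"
    then have "u \<noteq> y" "(u,y) \<in> E\<^sup>*" by auto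
    then obtain z where z: "(u,z) \<in> E\<^sup>*" "(z,y) \<in> E" by (metis rtranclE)
    then have "z = x" using treeleaf_unique[OF tl] e by blast
    then show "u \<in> {u. (u, x) \<in> E\<^sup>*}" using z by simp
  next
    fix u assume "u \<in> {u. (u, x) \<in> E\<^sup>*}"
    then have ux: "(u,x) \<in> E\<^sup>*" by simp
    then have "(u,y) \<in> E\<^sup>*" using e by (meson rtrancl.rtrancl_into_rtrancl)
    moreover have "u \<noteq> y" using ux no_self[OF e] by blast
    ultimately show "u \<in> {u. u \<noteq> y \<and> (u,y) \<in> E\<^sup>*}" by simp
  qed
  then show ?thesis using anc_num_eq[OF EV2[OF e]] xy by simp
qed

lemma F4: "a \<in> T \<Longrightarrow> card {v \<in> C. (v, fst a) \<in> E\<^sup>*} + 1 = card {u. (u, fst a) \<in> E\<^sup>*}"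
proof -
  assume a: "a \<in> T"
  obtain x y where xy: "a = (x,y)" by (cases a)
  have e: "(x,y) \<in> E" and nr: "\<not> is_ret N x"
    using a xy T_iff by auto
  have xV: "x \<in> V" using EV1 e by blast
  have eq: "{u. (u, x) \<in> E\<^sup>*} = insert \<rho> {v \<in> C. (v, x) \<in> E\<^sup>*}"
  proof (rule set_eqI, rule iffI)
    fix u assume "u \<in> {u. (u, x) \<in> E\<^sup>*}"
    then have ux: "(u,x) \<in> E\<^sup>*" by simp
    have uV: "u \<in> V" using rt_V[OF ux xV] .
    show "u \<in> insert \<rho> {v \<in> C. (v, x) \<in> E\<^sup>*}"
    proof (cases "u = \<rho>")
      case True then show ?thesis by simp
    next
      case False
      have "\<not> is_root N u" using False root_unique by blast
      moreover have "\<not> is_leaf N u"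
      proof
        assume l: "is_leaf N u"
        show False
        proof (cases "u = x")
          case True then show False using l e leaf_noout by blast
        next
          case False
          then obtain z where "(u,z) \<in> E" using ux by (metis converse_rtranclE)
          then show False using l leaf_noout by blast
        qed
      qed
      moreover have "\<not> is_ret N u"
      proof
        assume r: "is_ret N u"
        then have "u \<noteq> x" using nr by blast
        then have "(u,x) \<in> E\<^sup>+" using ux by (simp add: rtrancl_eq_or_trancl)
        then have "is_leaf N x" using ret_below r by blast
        then show False using e leaf_noout by blast
      qed
      ultimately have "is_tree_node N u" using classify[OF uV] by blast
      then show ?thesis using tree_in_C ux by simp
    qed
  next
    fix u assume "u \<in> insert \<rho> {v \<in> C. (v, x) \<in> E\<^sup>*}"
    then show "u \<in> {u. (u, x) \<in> E\<^sup>*}" using root_reach[OF xV] by auto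
  qed
  have fin: "finite {v \<in> C. (v, x) \<in> E\<^sup>*}" using finC by simp
  have "card {u. (u, x) \<in> E\<^sup>*} = card {v \<in> C. (v, x) \<in> E\<^sup>*} + 1"
    unfolding eq using fin root_notC by simp
  then show ?thesis using xy by simp
qed

lemma cnt: "finite B \<Longrightarrow> card {b \<in> B. Q b} = (\<Sum>b\<in>B. if Q b then 1 else (0::nat))"
  using sum.inter_filter[of B "\<lambda>_. (1::nat)" Q] by simp

lemma swapcard: "finite A \<Longrightarrow> finite B \<Longrightarrow>
  (\<Sum>a\<in>A. card {b \<in> B. Q a b}) = (\<Sum>b\<in>B. card {a \<in> A. Q a b})"
  by (simp add: cnt sum.swap[of _ A B])

definition D where "D a = card {v \<in> C. (snd a, v) \<in> E\<^sup>*}"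
definition U where "U a = card {u. (u, fst a) \<in> E\<^sup>*}"

lemma I1: "(\<Sum>a\<in>T. D a) = A_C N"
proof -
  have "(\<Sum>a\<in>T. D a) = (\<Sum>x\<in>C. card {v \<in> C. (x, v) \<in> E\<^sup>*})"
    unfolding D_def using sum.reindex_bij_betw[OF bij_snd, of "\<lambda>x. card {v \<in> C. (x, v) \<in> E\<^sup>*}"]
    by simp
  also have "\<dots> = (\<Sum>v\<in>C. card {x \<in> C. (x, v) \<in> E\<^sup>*})"
    by (rule swapcard[OF finC finC])
  also have "\<dots> = (\<Sum>v\<in>C. anc_num N v)" using F2 by simp
  finally show ?thesis unfolding A_C_def .
qed

lemma I2: "(\<Sum>a\<in>T. U a) = A_C N"
proof -
  have "(\<Sum>a\<in>T. U a) = (\<Sum>a\<in>T. anc_num N (snd a))" unfolding U_def using F3 by simp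
  also have "\<dots> = (\<Sum>v\<in>C. anc_num N v)"
    using sum.reindex_bij_betw[OF bij_snd, of "anc_num N"] by simp
  finally show ?thesis unfolding A_C_def .
qed

lemma F4': "a \<in> T \<Longrightarrow> card {b \<in> T. (snd b, fst a) \<in> E\<^sup>*} + 1 = U a"
proof -
  assume a: "a \<in> T"
  have im: "snd ` T = C" using bij_snd unfolding bij_betw_def by simp
  have "snd ` {b \<in> T. (snd b, fst a) \<in> E\<^sup>*} = {v \<in> snd ` T. (v, fst a) \<in> E\<^sup>*}"
    by blast
  then have e1: "snd ` {b \<in> T. (snd b, fst a) \<in> E\<^sup>*} = {v \<in> C. (v, fst a) \<in> E\<^sup>*}"
    using im by simp
  have inj: "inj_on snd {b \<in> T. (snd b, fst a) \<in> E\<^sup>*}"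
    by (rule inj_on_subset[OF inj_snd_T]) simp
  have "card {b \<in> T. (snd b, fst a) \<in> E\<^sup>*} = card {v \<in> C. (v, fst a) \<in> E\<^sup>*}"
    using card_image[OF inj] e1 by simp
  then show ?thesis using F4[OF a] unfolding U_def by simp
qed

end


lemma ins_edges:
  "(Old x, Old y) \<in> edges (ins_ret_set N P) \<longleftrightarrow> (x,y) \<in> edges N \<and> (x,y) \<notin> P"
  "(Old x, Sub e) \<in> edges (ins_ret_set N P) \<longleftrightarrow> e \<in> P \<and> fst e = x"
  "(Old x, Ret) \<notin> edges (ins_ret_set N P)"
  "(Old x, NewLeaf) \<notin> edges (ins_ret_set N P)"
  "(Sub e, Old y) \<in> edges (ins_ret_set N P) \<longleftrightarrow> e \<in> P \<and> snd e = y"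
  "(Sub e, Sub e') \<notin> edges (ins_ret_set N P)"
  "(Sub e, Ret) \<in> edges (ins_ret_set N P) \<longleftrightarrow> e \<in> P"
  "(Sub e, NewLeaf) \<notin> edges (ins_ret_set N P)"
  "(Ret, Old y) \<notin> edges (ins_ret_set N P)"
  "(Ret, Sub e) \<notin> edges (ins_ret_set N P)"
  "(Ret, Ret) \<notin> edges (ins_ret_set N P)"
  "(Ret, NewLeaf) \<in> edges (ins_ret_set N P)"
  "(NewLeaf, z) \<notin> edges (ins_ret_set N P)"
  unfolding ins_ret_set_def by force+

lemma ins_nodes:
  "Old v \<in> nodes (ins_ret_set N P) \<longleftrightarrow> v \<in> nodes N"
  "Sub e \<in> nodes (ins_ret_set N P) \<longleftrightarrow> e \<in> P"
  "Ret \<in> nodes (ins_ret_set N P)"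
  "NewLeaf \<in> nodes (ins_ret_set N P)"
  unfolding ins_ret_set_def by auto

fun tp :: "'v ext \<Rightarrow> 'v" where
  "tp (Old v) = v" | "tp (Sub e) = snd e" | "tp Ret = undefined" | "tp NewLeaf = undefined"
fun bt :: "'v ext \<Rightarrow> 'v" where
  "bt (Old v) = v" | "bt (Sub e) = fst e" | "bt Ret = undefined" | "bt NewLeaf = undefined"
fun okP :: "('v \<times> 'v) set \<Rightarrow> 'v ext \<Rightarrow> bool" where
  "okP P (Old v) = True" | "okP P (Sub e) = (e \<in> P)" | "okP P Ret = False" | "okP P NewLeaf = False"

locale ins = net +
  fixes P
  assumes PT: "P \<subseteq> ToT N" and cP: "card P = 2"
begin

abbreviation "N' \<equiv> ins_ret_set N P"
abbreviation "E' \<equiv> edges N'"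

lemma PE: "e \<in> P \<Longrightarrow> e \<in> E" using PT T_E by blast
lemma finP: "finite P" using cP card_ge_0_finite by (metis zero_less_numeral)

lemma reach_Ret: "(Ret, y) \<in> E'\<^sup>* \<Longrightarrow> y = Ret \<or> y = NewLeaf"
proof (induction rule: rtrancl_induct)
  case base then show ?case by simp
next
  case (step y z)
  then show ?case by (cases z) (auto simp: ins_edges)
qed

lemma reachD: "(x,y) \<in> E'\<^sup>* \<Longrightarrow> okP P x \<Longrightarrow>
   y = x \<or> y = Ret \<or> y = NewLeaf \<or> (okP P y \<and> (tp x, bt y) \<in> E\<^sup>*)"
proof (induction rule: rtrancl_induct)
  case base then show ?case by simp
next
  case (step y z)
  from step.IH[OF step.prems] consider "y = x" | "y = Ret" | "y = NewLeaf" | "okP P y \<and> (tp x, bt y) \<in> E\<^sup>*"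
    by blast
  then show ?case
  proof cases
    case 1
    then show ?thesis using step.hyps(2) step.prems
      by (cases x; cases z) (auto simp: ins_edges)
  next
    case 2
    then show ?thesis using step.hyps(2) by (cases z) (auto simp: ins_edges)
  next
    case 3
    then show ?thesis using step.hyps(2) by (simp add: ins_edges)
  next
    case 4
    show ?thesis
    proof (cases y)
      case (Old p)
      then show ?thesis using 4 step.hyps(2)
        by (cases z) (auto simp: ins_edges intro: rtrancl_into_rtrancl)
    next
      case (Sub e)
      then have eE: "(fst e, snd e) \<in> E" using 4 PE by simp
      then show ?thesis using 4 step.hyps(2) Sub
        by (cases z) (auto simp: ins_edges intro: rtrancl_into_rtrancl)
    next
      case Ret then show ?thesis using 4 by simp
    next
      case NewLeaf then show ?thesis using 4 by simp
    qed
  qed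
qed

lemma lift1: "(p,q) \<in> E \<Longrightarrow> (Old p, Old q) \<in> E'\<^sup>+"
proof (cases "(p,q) \<in> P")
  case True
  assume e: "(p,q) \<in> E"
  have "(Old p, Sub (p,q)) \<in> E'" "(Sub (p,q), Old q) \<in> E'" using True by (simp_all add: ins_edges)
  then show ?thesis by (meson trancl.simps)
next
  case False
  assume e: "(p,q) \<in> E"
  then have "(Old p, Old q) \<in> E'" using False by (simp add: ins_edges)
  then show ?thesis by blast
qed

lemma lift: "(p,q) \<in> E\<^sup>* \<Longrightarrow> (Old p, Old q) \<in> E'\<^sup>*"
proof (induction rule: rtrancl_induct)
  case base then show ?case by simp
next
  case (step y z)
  then show ?case using lift1[OF step.hyps(2)] by (meson rtrancl_trancl_trancl trancl_into_rtrancl)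
qed

lemma reachI: "okP P x \<Longrightarrow> okP P y \<Longrightarrow> (tp x, bt y) \<in> E\<^sup>* \<Longrightarrow> (x,y) \<in> E'\<^sup>*"
proof -
  assume ox: "okP P x" and oy: "okP P y" and r: "(tp x, bt y) \<in> E\<^sup>*"
  have L: "(Old (tp x), Old (bt y)) \<in> E'\<^sup>*" using lift[OF r] .
  have A: "(x, Old (tp x)) \<in> E'\<^sup>*"
    using ox by (cases x) (auto simp: ins_edges intro: r_into_rtrancl)
  have B: "(Old (bt y), y) \<in> E'\<^sup>*"
    using oy by (cases y) (auto simp: ins_edges intro: r_into_rtrancl)
  show ?thesis using A L B by (meson rtrancl_trans)
qed

lemma out_ok: "(x,z) \<in> E' \<Longrightarrow> x \<noteq> Ret \<Longrightarrow> okP P x"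
  by (cases x; cases z) (auto simp: ins_edges)


lemma finE': "finite {u. (u,v) \<in> P}"
proof -
  have "{u. (u,v) \<in> P} \<subseteq> fst ` P" by force
  then show ?thesis using finP finite_subset by blast
qed

lemma finE'': "finite {w. (v,w) \<in> P}"
proof -
  have "{w. (v,w) \<in> P} \<subseteq> snd ` P" by force
  then show ?thesis using finP finite_subset by blast
qed

lemma pred_Old: "{x. (x, Old v) \<in> E'} = Old ` {u. (u,v) \<in> E \<and> (u,v) \<notin> P} \<union> Sub ` ((\<lambda>u. (u,v)) ` {u. (u,v) \<in> P})"
proof (rule set_eqI)
  fix x show "x \<in> {x. (x, Old v) \<in> E'} \<longleftrightarrow> x \<in> Old ` {u. (u,v) \<in> E \<and> (u,v) \<notin> P} \<union> Sub ` ((\<lambda>u. (u,v)) ` {u. (u,v) \<in> P})"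
    by (cases x) (auto simp: ins_edges)
qed

lemma succ_Old: "{x. (Old v, x) \<in> E'} = Old ` {w. (v,w) \<in> E \<and> (v,w) \<notin> P} \<union> Sub ` ((\<lambda>w. (v,w)) ` {w. (v,w) \<in> P})"
proof (rule set_eqI)
  fix x show "x \<in> {x. (Old v, x) \<in> E'} \<longleftrightarrow> x \<in> Old ` {w. (v,w) \<in> E \<and> (v,w) \<notin> P} \<union> Sub ` ((\<lambda>w. (v,w)) ` {w. (v,w) \<in> P})"
    by (cases x) (auto simp: ins_edges)
qed

lemma card_split: "finite A \<Longrightarrow> finite B \<Longrightarrow> card (Old ` A \<union> Sub ` B) = card A + card B"
  by (subst card_Un_disjoint) (auto simp: card_image inj_on_def)

lemma indeg_Old: "indeg N' (Old v) = indeg N v"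
proof -
  have f1: "finite {u. (u,v) \<in> E \<and> (u,v) \<notin> P}" using fin_pred[of v] by (simp add: finite_subset)
  have "indeg N' (Old v) = card {u. (u,v) \<in> E \<and> (u,v) \<notin> P} + card ((\<lambda>u. (u,v)) ` {u. (u,v) \<in> P})"
    unfolding indeg_def pred_Old using f1 finE' by (simp add: card_split)
  also have "\<dots> = card {u. (u,v) \<in> E \<and> (u,v) \<notin> P} + card {u. (u,v) \<in> P}"
    by (subst card_image) (auto simp: inj_on_def)
  also have "\<dots> = card ({u. (u,v) \<in> E \<and> (u,v) \<notin> P} \<union> {u. (u,v) \<in> P})"
    using f1 finE' by (subst card_Un_disjoint) auto
  also have "{u. (u,v) \<in> E \<and> (u,v) \<notin> P} \<union> {u. (u,v) \<in> P} = {u. (u,v) \<in> E}" using PE by blast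
  finally show ?thesis unfolding indeg_def .
qed

lemma outdeg_Old: "outdeg N' (Old v) = outdeg N v"
proof -
  have f1: "finite {w. (v,w) \<in> E \<and> (v,w) \<notin> P}" using fin_succ[of v] by (simp add: finite_subset)
  have "outdeg N' (Old v) = card {w. (v,w) \<in> E \<and> (v,w) \<notin> P} + card ((\<lambda>w. (v,w)) ` {w. (v,w) \<in> P})"
    unfolding outdeg_def succ_Old using f1 finE'' by (simp add: card_split)
  also have "\<dots> = card {w. (v,w) \<in> E \<and> (v,w) \<notin> P} + card {w. (v,w) \<in> P}"
    by (subst card_image) (auto simp: inj_on_def)
  also have "\<dots> = card ({w. (v,w) \<in> E \<and> (v,w) \<notin> P} \<union> {w. (v,w) \<in> P})"
    using f1 finE'' by (subst card_Un_disjoint) auto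
  also have "{w. (v,w) \<in> E \<and> (v,w) \<notin> P} \<union> {w. (v,w) \<in> P} = {w. (v,w) \<in> E}" using PE by blast
  finally show ?thesis unfolding outdeg_def .
qed

lemma deg_Sub: "e \<in> P \<Longrightarrow> indeg N' (Sub e) = 1 \<and> outdeg N' (Sub e) = 2"
proof -
  assume e: "e \<in> P"
  have "{x. (x, Sub e) \<in> E'} = {Old (fst e)}"
  proof (rule set_eqI)
    fix x show "x \<in> {x. (x, Sub e) \<in> E'} \<longleftrightarrow> x \<in> {Old (fst e)}" using e by (cases x) (auto simp: ins_edges)
  qed
  moreover have "{x. (Sub e, x) \<in> E'} = {Old (snd e), Ret}"
  proof (rule set_eqI)
    fix x show "x \<in> {x. (Sub e, x) \<in> E'} \<longleftrightarrow> x \<in> {Old (snd e), Ret}" using e by (cases x) (auto simp: ins_edges)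
  qed
  ultimately show ?thesis unfolding indeg_def outdeg_def by simp
qed

lemma deg_Ret: "indeg N' Ret = 2 \<and> outdeg N' Ret = 1"
proof -
  have "{x. (x, Ret) \<in> E'} = Sub ` P"
  proof (rule set_eqI)
    fix x show "x \<in> {x. (x, Ret) \<in> E'} \<longleftrightarrow> x \<in> Sub ` P" by (cases x) (auto simp: ins_edges)
  qed
  moreover have "{x. (Ret, x) \<in> E'} = {NewLeaf}"
  proof (rule set_eqI)
    fix x show "x \<in> {x. (Ret, x) \<in> E'} \<longleftrightarrow> x \<in> {NewLeaf}" by (cases x) (auto simp: ins_edges)
  qed
  moreover have "card (Sub ` P) = 2" using cP by (subst card_image) (auto simp: inj_on_def)
  ultimately show ?thesis unfolding indeg_def outdeg_def by simp
qed

lemma deg_NL: "indeg N' NewLeaf = 1 \<and> outdeg N' NewLeaf = 0"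
proof -
  have "{x. (x, NewLeaf) \<in> E'} = {Ret}"
  proof (rule set_eqI)
    fix x show "x \<in> {x. (x, NewLeaf) \<in> E'} \<longleftrightarrow> x \<in> {Ret}" by (cases x) (auto simp: ins_edges)
  qed
  moreover have "{x. (NewLeaf, x) \<in> E'} = {}" by (auto simp: ins_edges)
  ultimately show ?thesis unfolding indeg_def outdeg_def by simp
qed

lemma cls_Old:
  "is_tree_node N' (Old v) \<longleftrightarrow> is_tree_node N v"
  "is_leaf N' (Old v) \<longleftrightarrow> is_leaf N v"
  "is_ret N' (Old v) \<longleftrightarrow> is_ret N v"
  "is_root N' (Old v) \<longleftrightarrow> is_root N v"
  unfolding is_tree_node_def is_leaf_def is_ret_def is_root_def
  by (simp_all add: indeg_Old outdeg_Old ins_nodes)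

lemma cls_Sub:
  "is_tree_node N' (Sub e) \<longleftrightarrow> e \<in> P"
  "\<not> is_leaf N' (Sub e)"
  "\<not> is_ret N' (Sub e)"
  "\<not> is_root N' (Sub e)"
  unfolding is_tree_node_def is_leaf_def is_ret_def is_root_def
  using deg_Sub[of e] by (auto simp: ins_nodes)

lemma cls_Ret:
  "\<not> is_tree_node N' Ret" "\<not> is_leaf N' Ret" "is_ret N' Ret" "\<not> is_root N' Ret"
  unfolding is_tree_node_def is_leaf_def is_ret_def is_root_def
  using deg_Ret by (auto simp: ins_nodes)

lemma cls_NL:
  "\<not> is_tree_node N' NewLeaf" "is_leaf N' NewLeaf" "\<not> is_ret N' NewLeaf" "\<not> is_root N' NewLeaf"
  unfolding is_tree_node_def is_leaf_def is_ret_def is_root_def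
  using deg_NL by (auto simp: ins_nodes)

lemma root': "root_of N' = Old \<rho>"
proof -
  have r: "is_root N' (Old \<rho>)" using root cls_Old by simp
  have u: "x = Old \<rho>" if "is_root N' x" for x
    using that root_unique cls_Old cls_Sub cls_Ret cls_NL by (cases x) auto
  show ?thesis unfolding root_of_def[of N'] by (rule the_equality[where P="is_root N'", OF r u])
qed

lemma trancl_Old: "(Old r, Old v) \<in> E'\<^sup>+ \<longleftrightarrow> (r,v) \<in> E\<^sup>+"
proof
  assume a: "(Old r, Old v) \<in> E'\<^sup>+"
  obtain z where z: "(Old r, z) \<in> E'" "(z, Old v) \<in> E'\<^sup>*" using tranclD[OF a] by blast
  show "(r,v) \<in> E\<^sup>+"
  proof (cases z)
    case (Old q)
    then have rq: "(r,q) \<in> E" using z by (simp add: ins_edges)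
    have "(q,v) \<in> E\<^sup>*" using reachD[OF z(2)] Old by auto
    then show ?thesis using rq by (meson rtrancl_into_trancl2)
  next
    case (Sub e)
    then have e: "e \<in> P" "fst e = r" using z by (simp_all add: ins_edges)
    have "(snd e, v) \<in> E\<^sup>*" using reachD[OF z(2)] Sub e by auto
    moreover have "(r, snd e) \<in> E" using PE[OF e(1)] e(2) by (metis prod.collapse)
    ultimately show ?thesis by (meson rtrancl_into_trancl2)
  next
    case Ret then show ?thesis using z by (simp add: ins_edges)
  next
    case NewLeaf then show ?thesis using z by (simp add: ins_edges)
  qed
next
  assume a: "(r,v) \<in> E\<^sup>+"
  obtain q where q: "(r,q) \<in> E" "(q,v) \<in> E\<^sup>*" using tranclD[OF a] by blast
  show "(Old r, Old v) \<in> E'\<^sup>+" using lift1[OF q(1)] lift[OF q(2)] by (meson trancl_rtrancl_trancl)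
qed

lemma top_Old: "Old v \<in> top_comp N' \<longleftrightarrow> v \<in> C"
proof -
  have "(\<exists>r'. is_ret N' r' \<and> (r', Old v) \<in> E'\<^sup>+) \<longleftrightarrow> (\<exists>r. is_ret N r \<and> (r,v) \<in> E\<^sup>+)"
  proof
    assume "\<exists>r'. is_ret N' r' \<and> (r', Old v) \<in> E'\<^sup>+"
    then obtain r' where r': "is_ret N' r'" "(r', Old v) \<in> E'\<^sup>+" by blast
    show "\<exists>r. is_ret N r \<and> (r,v) \<in> E\<^sup>+"
    proof (cases r')
      case (Old r) then show ?thesis using r' cls_Old trancl_Old by auto
    next
      case (Sub e) then show ?thesis using r' cls_Sub by simp
    next
      case Ret
      then have "(Ret, Old v) \<in> E'\<^sup>*" using r' trancl_into_rtrancl by simp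
      then show ?thesis using reach_Ret by blast
    next
      case NewLeaf then show ?thesis using r' cls_NL by simp
    qed
  next
    assume "\<exists>r. is_ret N r \<and> (r,v) \<in> E\<^sup>+"
    then obtain r where "is_ret N r" "(r,v) \<in> E\<^sup>+" by blast
    then show "\<exists>r'. is_ret N' r' \<and> (r', Old v) \<in> E'\<^sup>+" using cls_Old trancl_Old by blast
  qed
  then have H: "(\<forall>r'. is_ret N' r' \<longrightarrow> (r', Old v) \<notin> E'\<^sup>+) \<longleftrightarrow> (\<forall>r. is_ret N r \<longrightarrow> (r,v) \<notin> E\<^sup>+)"
    by blast
  show ?thesis unfolding top_comp_def using H by (simp add: cls_Old ins_nodes)
qed

lemma top_Sub: "Sub e \<in> top_comp N' \<longleftrightarrow> e \<in> P"
proof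
  assume "Sub e \<in> top_comp N'" then show "e \<in> P" unfolding top_comp_def by (simp add: ins_nodes)
next
  assume e: "e \<in> P"
  have eT: "e \<in> T" using e PT by blast
  have nr: "\<not> is_ret N (fst e)" using eT T_iff by simp
  have eE: "(fst e, snd e) \<in> E" using PE[OF e] by simp
  have "\<not> (\<exists>r'. is_ret N' r' \<and> (r', Sub e) \<in> E'\<^sup>+)"
  proof
    assume "\<exists>r'. is_ret N' r' \<and> (r', Sub e) \<in> E'\<^sup>+"
    then obtain r' where r': "is_ret N' r'" "(r', Sub e) \<in> E'\<^sup>+" by blast
    have rt: "(r', Sub e) \<in> E'\<^sup>*" using r'(2) by (rule trancl_into_rtrancl)
    show False
    proof (cases r')
      case (Old r)
      then have rr: "is_ret N r" using r' cls_Old by simp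
      have "(r, fst e) \<in> E\<^sup>*" using reachD[OF rt] Old by auto
      moreover have "r \<noteq> fst e" using rr nr by blast
      ultimately have "(r, fst e) \<in> E\<^sup>+" by (simp add: rtrancl_eq_or_trancl)
      then have "is_leaf N (fst e)" using ret_below rr by blast
      then show False using eE leaf_noout by blast
    next
      case (Sub e') then show ?thesis using r' cls_Sub by simp
    next
      case Ret then show ?thesis using rt reach_Ret by blast
    next
      case NewLeaf then show ?thesis using r' cls_NL by simp
    qed
  qed
  then show "Sub e \<in> top_comp N'" unfolding top_comp_def using e by (simp add: cls_Sub ins_nodes)
qed

lemma top_comp': "top_comp N' = Old ` C \<union> Sub ` P"
proof (rule set_eqI)
  fix x show "x \<in> top_comp N' \<longleftrightarrow> x \<in> Old ` C \<union> Sub ` P"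
  proof (cases x)
    case (Old v) then show ?thesis using top_Old by auto
  next
    case (Sub e) then show ?thesis using top_Sub by auto
  next
    case Ret then show ?thesis unfolding top_comp_def using cls_Ret by auto
  next
    case NewLeaf
    have "(Ret, NewLeaf) \<in> E'\<^sup>+" by (simp add: ins_edges r_into_trancl')
    then show ?thesis unfolding top_comp_def using cls_Ret NewLeaf by auto
  qed
qed

lemma bt_V: "okP P x \<Longrightarrow> (tp x, w) \<in> E\<^sup>* \<Longrightarrow> w \<in> V \<Longrightarrow> bt x \<in> V"
proof (cases x)
  case (Sub e) then show "okP P x \<Longrightarrow> bt x \<in> V" using PE EV1 by (metis bt.simps(2) okP.simps(2) prod.collapse)
qed (auto intro: rt_V)

lemma ancN': "okP P y \<Longrightarrow> bt y \<in> V \<Longrightarrow>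
  ancestor N' x y \<longleftrightarrow> x \<noteq> y \<and> okP P x \<and> (tp x, bt y) \<in> E\<^sup>*"
proof
  assume oy: "okP P y" and bV: "bt y \<in> V" and a: "ancestor N' x y"
  have xy: "x \<noteq> y" "(x,y) \<in> E'\<^sup>*" using a unfolding ancestor_def by auto
  then obtain z where z: "(x,z) \<in> E'" by (metis converse_rtranclE)
  have xR: "x \<noteq> Ret"
  proof
    assume "x = Ret" then have "(Ret, y) \<in> E'\<^sup>*" using xy by simp
    then have "y = Ret \<or> y = NewLeaf" by (rule reach_Ret)
    then show False using oy by auto
  qed
  have ox: "okP P x" using out_ok[OF z xR] .
  have "(tp x, bt y) \<in> E\<^sup>*" using reachD[OF xy(2) ox] xy(1) oy by auto
  then show "x \<noteq> y \<and> okP P x \<and> (tp x, bt y) \<in> E\<^sup>*" using xy ox by simp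
next
  assume oy: "okP P y" and bV: "bt y \<in> V" and a: "x \<noteq> y \<and> okP P x \<and> (tp x, bt y) \<in> E\<^sup>*"
  have xy: "(x,y) \<in> E'\<^sup>*" using reachI a oy by blast
  have "bt x \<in> V" using bt_V a bV by blast
  then have "(tp (Old \<rho>), bt x) \<in> E\<^sup>*" using root_reach by simp
  then have "(Old \<rho>, x) \<in> E'\<^sup>*" using reachI a by (metis okP.simps(1))
  then show "ancestor N' x y" unfolding ancestor_def root' using xy a by simp
qed

lemma anc_Old: "v \<in> V \<Longrightarrow> anc_num N' (Old v) = anc_num N v + card {e \<in> P. (snd e, v) \<in> E\<^sup>*}"
proof -
  assume v: "v \<in> V"
  have "{x. ancestor N' x (Old v)} = Old ` {u. u \<noteq> v \<and> (u,v) \<in> E\<^sup>*} \<union> Sub ` {e \<in> P. (snd e, v) \<in> E\<^sup>*}"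
  proof (rule set_eqI)
    fix x show "x \<in> {x. ancestor N' x (Old v)} \<longleftrightarrow> x \<in> Old ` {u. u \<noteq> v \<and> (u,v) \<in> E\<^sup>*} \<union> Sub ` {e \<in> P. (snd e, v) \<in> E\<^sup>*}"
      using ancN'[of "Old v" x] v by (cases x) auto
  qed
  then have "anc_num N' (Old v) = card {u. u \<noteq> v \<and> (u,v) \<in> E\<^sup>*} + card {e \<in> P. (snd e, v) \<in> E\<^sup>*}"
    unfolding anc_num_def using fin_anc[OF v] finP by (simp add: card_split)
  then show ?thesis using anc_num_eq[OF v] by simp
qed

lemma anc_Sub: "e \<in> P \<Longrightarrow> anc_num N' (Sub e) = U e + card {e' \<in> P. (snd e', fst e) \<in> E\<^sup>*}"
proof -
  assume e: "e \<in> P"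
  have eE: "(fst e, snd e) \<in> E" using PE[OF e] by simp
  have fV: "fst e \<in> V" using EV1[OF eE] .
  have "{x. ancestor N' x (Sub e)} = Old ` {u. (u, fst e) \<in> E\<^sup>*} \<union> Sub ` {e' \<in> P. (snd e', fst e) \<in> E\<^sup>*}"
  proof (rule set_eqI)
    fix x show "x \<in> {x. ancestor N' x (Sub e)} \<longleftrightarrow> x \<in> Old ` {u. (u, fst e) \<in> E\<^sup>*} \<union> Sub ` {e' \<in> P. (snd e', fst e) \<in> E\<^sup>*}"
    proof (cases x)
      case (Old u) then show ?thesis using ancN'[of "Sub e" x] e fV by auto
    next
      case (Sub e')
      have "e' \<noteq> e" if "(snd e', fst e) \<in> E\<^sup>*" using that no_self[OF eE] by blast
      then show ?thesis using ancN'[of "Sub e" x] e fV Sub by auto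
    next
      case Ret then show ?thesis using ancN'[of "Sub e" x] e fV by auto
    next
      case NewLeaf then show ?thesis using ancN'[of "Sub e" x] e fV by auto
    qed
  qed
  moreover have "finite {u. (u, fst e) \<in> E\<^sup>*}" using fin_anc[OF fV, of "\<lambda>_. True"] by simp
  ultimately show ?thesis unfolding anc_num_def U_def using finP by (simp add: card_split)
qed

lemma AC': "A_C N' = A_C N + (\<Sum>e\<in>P. D e + U e + card {e' \<in> P. (snd e', fst e) \<in> E\<^sup>*})"
proof -
  have "A_C N' = (\<Sum>x \<in> Old ` C. anc_num N' x) + (\<Sum>x \<in> Sub ` P. anc_num N' x)"
    unfolding A_C_def top_comp' using finC finP by (subst sum.union_disjoint) auto
  also have "(\<Sum>x \<in> Old ` C. anc_num N' x) = (\<Sum>v \<in> C. anc_num N v + card {e \<in> P. (snd e, v) \<in> E\<^sup>*})"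
    by (subst sum.reindex) (auto simp: inj_on_def anc_Old C_V)
  also have "\<dots> = A_C N + (\<Sum>v \<in> C. card {e \<in> P. (snd e, v) \<in> E\<^sup>*})"
    unfolding A_C_def by (simp add: sum.distrib)
  also have "(\<Sum>v \<in> C. card {e \<in> P. (snd e, v) \<in> E\<^sup>*}) = (\<Sum>e\<in>P. D e)"
    unfolding D_def using swapcard[OF finC finP, of "\<lambda>v e. (snd e, v) \<in> E\<^sup>*"] by simp
  also have "(\<Sum>x \<in> Sub ` P. anc_num N' x) = (\<Sum>e\<in>P. U e + card {e' \<in> P. (snd e', fst e) \<in> E\<^sup>*})"
    by (subst sum.reindex) (auto simp: inj_on_def anc_Sub)
  finally show ?thesis by (simp add: sum.distrib)
qed
end


context net begin

lemma card_E_in: "card E = (\<Sum>v\<in>V. indeg N v)"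
proof -
  have "E = converse (SIGMA v:V. {u. (u,v) \<in> E})" using EV by auto
  then have "card E = card (SIGMA v:V. {u. (u,v) \<in> E})" by (metis card_inverse)
  also have "\<dots> = (\<Sum>v\<in>V. card {u. (u,v) \<in> E})" using finV fin_pred by (simp add: card_SigmaI)
  finally show ?thesis unfolding indeg_def .
qed

lemma card_E_out: "card E = (\<Sum>v\<in>V. outdeg N v)"
proof -
  have "E = (SIGMA v:V. {w. (v,w) \<in> E})" using EV by auto
  then have "card E = card (SIGMA v:V. {w. (v,w) \<in> E})" by simp
  also have "\<dots> = (\<Sum>v\<in>V. card {w. (v,w) \<in> E})" using finV fin_succ by (simp add: card_SigmaI)
  finally show ?thesis unfolding outdeg_def .
qed

lemma indeg_cls: "v \<in> V \<Longrightarrow> int (indeg N v) = of_bool (is_leaf N v) + of_bool (is_tree_node N v) + 2 * of_bool (is_ret N v)"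
  using classify[of v] unfolding is_root_def is_leaf_def is_tree_node_def is_ret_def by auto

lemma outdeg_cls: "v \<in> V \<Longrightarrow> int (outdeg N v) = of_bool (is_root N v) + 2 * of_bool (is_tree_node N v) + of_bool (is_ret N v)"
  using classify[of v] unfolding is_root_def is_leaf_def is_tree_node_def is_ret_def by auto

lemma sum_bool: "(\<Sum>v\<in>V. (of_bool (Q v) :: int)) = int (card {v \<in> V. Q v})"
proof -
  have e: "V \<inter> {v. Q v} = {v \<in> V. Q v}" by auto
  show ?thesis using sum_of_bool_eq[OF finV finV, of Q] unfolding e by simp
qed

lemma cardC:
  assumes rets: "card {r. is_ret N r} = j"
    and lab: "label N ` {c. \<exists>r. is_ret N r \<and> (r, c) \<in> E} = {k+1..k+j}"
    and Xd: "X = {1..k+j}" and k1: "k \<ge> 1"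
  shows "card C = 2*(k+j) - 1"
proof -
  define Tr where "Tr = {v \<in> V. is_tree_node N v}"
  define RC where "RC = {c. \<exists>r. is_ret N r \<and> (r, c) \<in> E}"
  have LV: "leaves N \<subseteq> V" unfolding leaves_def is_leaf_def by auto
  have bij: "bij_betw (label N) (leaves N) X" using phylo by (simp add: phylo_network_def)
  have L: "card (leaves N) = k + j" using bij_betw_same_card[OF bij] Xd by simp
  have R: "card {v \<in> V. is_ret N v} = j"
  proof -
    have "{v \<in> V. is_ret N v} = {r. is_ret N r}" unfolding is_ret_def by auto
    then show ?thesis using rets by simp
  qed
  have Ro: "card {v \<in> V. is_root N v} = 1"
  proof -
    have "{v \<in> V. is_root N v} = {\<rho>}"
    proof (rule set_eqI, rule iffI)
      fix x assume "x \<in> {v \<in> V. is_root N v}" then show "x \<in> {\<rho>}" using root_unique by blast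
    next
      fix x assume "x \<in> {\<rho>}" then show "x \<in> {v \<in> V. is_root N v}" using root by (simp add: is_root_def)
    qed
    then show ?thesis by simp
  qed
  have Lv: "{v \<in> V. is_leaf N v} = leaves N" unfolding leaves_def is_leaf_def by auto
  have "int (card E) = (\<Sum>v\<in>V. int (indeg N v))" using card_E_in by simp
  also have "\<dots> = (\<Sum>v\<in>V. of_bool (is_leaf N v) + of_bool (is_tree_node N v) + 2 * of_bool (is_ret N v))"
    using indeg_cls by (rule sum.cong[OF refl])
  also have "\<dots> = int (card (leaves N)) + int (card Tr) + 2 * int j"
    by (simp add: sum.distrib sum_distrib_left[symmetric] sum_bool Tr_def Lv R)
  finally have h1: "int (card E) = int (card (leaves N)) + int (card Tr) + 2 * int j" .
  have "int (card E) = (\<Sum>v\<in>V. int (outdeg N v))" using card_E_out by simp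
  also have "\<dots> = (\<Sum>v\<in>V. of_bool (is_root N v) + 2 * of_bool (is_tree_node N v) + of_bool (is_ret N v))"
    using outdeg_cls by (rule sum.cong[OF refl])
  also have "\<dots> = 1 + 2 * int (card Tr) + int j"
    by (simp add: sum.distrib sum_distrib_left[symmetric] sum_bool Tr_def Ro R)
  finally have h2: "int (card E) = 1 + 2 * int (card Tr) + int j" .
  have cTr: "int (card Tr) = int k + 2 * int j - 1" using h1 h2 L by simp
  have RCL: "RC \<subseteq> leaves N"
  proof
    fix c assume "c \<in> RC"
    then obtain r where "is_ret N r" "(r, c) \<in> E" unfolding RC_def by blast
    then have "is_leaf N c" using simpl unfolding simplex_def by blast
    then show "c \<in> leaves N" unfolding leaves_def by simp
  qed
  have inj: "inj_on (label N) (leaves N)" using bij_betw_imp_inj_on[OF bij] .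
  have cRC: "card RC = j"
  proof -
    have "card RC = card (label N ` RC)" using card_image[OF inj_on_subset[OF inj RCL]] by simp
    then show ?thesis using lab RC_def by simp
  qed
  have Ceq: "C = Tr \<union> (leaves N - RC)"
  proof (rule set_eqI)
    fix v show "v \<in> C \<longleftrightarrow> v \<in> Tr \<union> (leaves N - RC)"
    proof
      assume v: "v \<in> C"
      show "v \<in> Tr \<union> (leaves N - RC)"
      proof (cases "is_tree_node N v")
        case True then show ?thesis using v C_V Tr_def by simp
      next
        case False
        then have l: "is_leaf N v" using C_treeleaf v by blast
        have "v \<notin> RC"
        proof
          assume "v \<in> RC"
          then obtain r where r: "is_ret N r" "(r, v) \<in> E" unfolding RC_def by blast
          then have "(r, v) \<in> E\<^sup>+" by (simp add: r_into_trancl')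
          then show False using C_noret[OF v r(1)] by simp
        qed
        then show ?thesis using l by (simp add: leaves_def)
      qed
    next
      assume v: "v \<in> Tr \<union> (leaves N - RC)"
      show "v \<in> C"
      proof (cases "v \<in> Tr")
        case True then show ?thesis using tree_in_C Tr_def by simp
      next
        case False
        then have vl: "v \<in> leaves N" and nrc: "v \<notin> RC" using v by auto
        then have l: "is_leaf N v" by (simp add: leaves_def)
        have vV: "v \<in> V" using l unfolding is_leaf_def by simp
        have nb: "\<not> (\<exists>r. is_ret N r \<and> (r, v) \<in> E\<^sup>+)"
        proof
          assume "\<exists>r. is_ret N r \<and> (r, v) \<in> E\<^sup>+"
          then obtain r where r: "is_ret N r" "(r, v) \<in> E\<^sup>+" by blast
          have rv: "(r, v) \<in> E" using ret_below[OF r] by simp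
          have "v \<in> RC" unfolding RC_def using r(1) rv by blast
          then show False using nrc by simp
        qed
        show ?thesis unfolding top_comp_def using vV l nb by simp
      qed
    qed
  qed
  have finL: "finite (leaves N)" using LV finV finite_subset by blast
  have finTr: "finite Tr" using finV Tr_def by simp
  have disj: "Tr \<inter> (leaves N - RC) = {}" using leaf_not_tree by (auto simp: Tr_def leaves_def)
  have "card C = card Tr + card (leaves N - RC)" unfolding Ceq
    using finL finTr disj by (simp add: card_Un_disjoint)
  also have "card (leaves N - RC) = k" using card_Diff_subset[OF finite_subset[OF RCL finL] RCL] L cRC by simp
  finally have "int (card C) = int k + 2 * int j - 1 + int k" using cTr by simp
  moreover have "int (2*(k+j) - 1) = 2*int k + 2*int j - 1" using k1 by (simp add: of_nat_diff)
  ultimately have "int (card C) = int (2*(k+j) - 1)" by linarith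
  then show ?thesis by simp
qed

end


context net begin

definition cc where "cc a b = (if (snd b, fst a) \<in> E\<^sup>* then 1 else (0::nat))"
definition w where "w a b = D a + U a + cc a b"

lemma pairval: "a \<in> T \<Longrightarrow> b \<in> T \<Longrightarrow> a \<noteq> b \<Longrightarrow>
  A_C (ins_ret_set N {a,b}) = A_C N + w a b + w b a"
proof -
  assume a: "a \<in> T" and b: "b \<in> T" and ab: "a \<noteq> b"
  interpret I: ins N X "{a,b}"
    by unfold_locales (use a b ab in auto)
  have na: "(snd a, fst a) \<notin> E\<^sup>*" using no_self[of "fst a" "snd a"] T_E[OF a] by simp
  have nb: "(snd b, fst b) \<notin> E\<^sup>*" using no_self[of "fst b" "snd b"] T_E[OF b] by simp
  have c1: "card {e' \<in> {a,b}. (snd e', fst a) \<in> E\<^sup>*} = cc a b"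
  proof -
    have "{e' \<in> {a,b}. (snd e', fst a) \<in> E\<^sup>*} = (if (snd b, fst a) \<in> E\<^sup>* then {b} else {})"
      using na by auto
    then show ?thesis unfolding cc_def by simp
  qed
  have c2: "card {e' \<in> {a,b}. (snd e', fst b) \<in> E\<^sup>*} = cc b a"
  proof -
    have "{e' \<in> {a,b}. (snd e', fst b) \<in> E\<^sup>*} = (if (snd a, fst b) \<in> E\<^sup>* then {a} else {})"
      using nb by auto
    then show ?thesis unfolding cc_def by simp
  qed
  show ?thesis using I.AC' ab c1 c2 unfolding w_def by simp
qed

lemma sumS: "(\<Sum>x \<in> Sigma T (\<lambda>a. T - {a}). (F x :: int)) = (\<Sum>a\<in>T. \<Sum>b\<in>T. F (a,b)) - (\<Sum>a\<in>T. F (a,a))"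
proof -
  have "(\<Sum>x \<in> Sigma T (\<lambda>a. T - {a}). F x) = (\<Sum>a\<in>T. \<Sum>b\<in>T - {a}. F (a,b))"
    using sum.Sigma[of T "\<lambda>a. T - {a}" "\<lambda>a b. F (a,b)", symmetric] finT by simp
  also have "\<dots> = (\<Sum>a\<in>T. (\<Sum>b\<in>T. F (a,b)) - F (a,a))"
    using finT by (intro sum.cong refl) (simp add: sum_diff1)
  finally show ?thesis by (simp add: sum_subtractf)
qed

lemma total:
  "(\<Sum>x \<in> Sigma T (\<lambda>a. T - {a}). int (A_C N + w (fst x) (snd x) + w (snd x) (fst x)))
   = (int (card T)^2 + 3 * int (card T) - 2) * int (A_C N) - 2 * int (card T)"
proof -
  let ?m = "int (card T)" and ?A = "int (A_C N)"
  have sD: "(\<Sum>a\<in>T. int (D a)) = ?A" using I1 by (metis of_nat_sum)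
  have sU: "(\<Sum>a\<in>T. int (U a)) = ?A" using I2 by (metis of_nat_sum)
  have scc: "(\<Sum>b\<in>T. int (cc a b)) = int (U a) - 1" if a: "a \<in> T" for a
  proof -
    have "(\<Sum>b\<in>T. int (cc a b)) = int (card {b \<in> T. (snd b, fst a) \<in> E\<^sup>*})"
      unfolding cc_def using cnt[OF finT, of "\<lambda>b. (snd b, fst a) \<in> E\<^sup>*"]
      by (simp add: of_nat_sum[symmetric] if_distrib)
    then show ?thesis using F4'[OF a] by simp
  qed
  have ccaa: "cc a a = 0" if a: "a \<in> T" for a
    using no_self[of "fst a" "snd a"] T_E[OF a] unfolding cc_def by simp
  have sw: "(\<Sum>a\<in>T. \<Sum>b\<in>T. int (w a b)) = 2 * ?m * ?A + ?A - ?m"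
  proof -
    have "(\<Sum>a\<in>T. \<Sum>b\<in>T. int (w a b)) = (\<Sum>a\<in>T. ?m * (int (D a) + int (U a)) + (\<Sum>b\<in>T. int (cc a b)))"
      unfolding w_def by (simp add: sum.distrib algebra_simps)
    also have "\<dots> = (\<Sum>a\<in>T. ?m * (int (D a) + int (U a)) + (int (U a) - 1))"
      using scc by (intro sum.cong refl) simp
    also have "\<dots> = ?m * (\<Sum>a\<in>T. int (D a)) + ?m * (\<Sum>a\<in>T. int (U a)) + (\<Sum>a\<in>T. int (U a)) - ?m"
      by (simp add: sum.distrib sum_subtractf sum_distrib_left algebra_simps)
    finally show ?thesis using sD sU by simp
  qed
  have sw2: "(\<Sum>a\<in>T. \<Sum>b\<in>T. int (w b a)) = 2 * ?m * ?A + ?A - ?m"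
    using sw sum.swap[of "\<lambda>a b. int (w b a)" T T] by simp
  have sdiag: "(\<Sum>a\<in>T. int (A_C N + w a a + w a a)) = ?m * ?A + 4 * ?A"
  proof -
    have "(\<Sum>a\<in>T. int (A_C N + w a a + w a a)) = (\<Sum>a\<in>T. ?A + 2 * int (D a) + 2 * int (U a))"
      using ccaa unfolding w_def by (intro sum.cong refl) simp
    also have "\<dots> = ?m * ?A + 2 * (\<Sum>a\<in>T. int (D a)) + 2 * (\<Sum>a\<in>T. int (U a))"
      by (simp add: sum.distrib sum_distrib_left)
    finally show ?thesis using sD sU by simp
  qed
  have "(\<Sum>x \<in> Sigma T (\<lambda>a. T - {a}). int (A_C N + w (fst x) (snd x) + w (snd x) (fst x)))
     = (\<Sum>a\<in>T. \<Sum>b\<in>T. int (A_C N + w a b + w b a)) - (\<Sum>a\<in>T. int (A_C N + w a a + w a a))"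
    using sumS[of "\<lambda>x. int (A_C N + w (fst x) (snd x) + w (snd x) (fst x))"] by simp
  also have "(\<Sum>a\<in>T. \<Sum>b\<in>T. int (A_C N + w a b + w b a)) = ?m * ?m * ?A + (\<Sum>a\<in>T. \<Sum>b\<in>T. int (w a b)) + (\<Sum>a\<in>T. \<Sum>b\<in>T. int (w b a))"
    by (simp add: sum.distrib)
  finally show ?thesis using sw sw2 sdiag by (simp add: power2_eq_square algebra_simps)
qed

end



theorem mainTheorem7:
  fixes N :: "'v network" and k j n :: nat
  assumes "k \<ge> 1" and "n = k + j" and "OC k j N"
  shows "int (\<Sum>P \<in> {{e', e''} | e' e''. e' \<in> ToT N \<and> e'' \<in> ToT N \<and> e' \<noteq> e''}.
                A_C (ins_ret_set N P))
         = (2 * int n ^ 2 + int n - 2) * int (A_C N) - (2 * int n - 1)"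
proof -
  have ph: "phylo_network N {1..k+j}" and sx: "simplex N"
    and rets: "card {r. is_ret N r} = j"
    and lab: "label N ` {c. \<exists>r. is_ret N r \<and> (r, c) \<in> edges N} = {k+1..k+j}"
    using assms(3) unfolding OC_def by auto
  interpret net N "{1..k+j}" using ph sx by unfold_locales
  have mC: "card C = 2*(k+j) - 1" using cardC[OF rets lab refl assms(1)] .
  have mT: "card T = card C" using bij_betw_same_card[OF bij_snd] .
  have mTi: "int (card T) = 2 * int n - 1" using mT mC assms(1,2) by simp
  define S where "S = Sigma T (\<lambda>a. T - {a})"
  define h where "h = (\<lambda>x::('v \<times> 'v) \<times> ('v \<times> 'v). {fst x, snd x})"
  have finS: "finite S" unfolding S_def using finT by simp
  have Peq: "{{e', e''} | e' e''. e' \<in> ToT N \<and> e'' \<in> ToT N \<and> e' \<noteq> e''} = h ` S"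
  proof (rule set_eqI, rule iffI)
    fix P assume "P \<in> {{e', e''} | e' e''. e' \<in> ToT N \<and> e'' \<in> ToT N \<and> e' \<noteq> e''}"
    then obtain a b where "P = {a,b}" "a \<in> T" "b \<in> T" "a \<noteq> b" by blast
    then have "(a,b) \<in> S" "P = h (a,b)" unfolding S_def h_def by auto
    then show "P \<in> h ` S" by blast
  next
    fix P assume "P \<in> h ` S"
    then obtain x where "x \<in> S" "P = h x" by blast
    then have "fst x \<in> T" "snd x \<in> T" "fst x \<noteq> snd x" "P = {fst x, snd x}"
      unfolding S_def h_def by auto
    then show "P \<in> {{e', e''} | e' e''. e' \<in> ToT N \<and> e'' \<in> ToT N \<and> e' \<noteq> e''}"
      by blast
  qed
  let ?G = "\<lambda>P. int (A_C (ins_ret_set N P))"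
  have fib: "card {y \<in> S. h y = P} = 2" if P: "P \<in> h ` S" for P
  proof -
    obtain a b where ab: "(a,b) \<in> S" "P = {a,b}" using P unfolding h_def by auto
    have ne: "a \<noteq> b" using ab unfolding S_def by auto
    have "{y \<in> S. h y = P} = {(a,b), (b,a)}"
    proof (rule set_eqI, rule iffI)
      fix y assume "y \<in> {y \<in> S. h y = P}"
      then have "{fst y, snd y} = {a,b}" using ab unfolding h_def by simp
      then have "y = (a,b) \<or> y = (b,a)" by (metis doubleton_eq_iff prod.collapse)
      then show "y \<in> {(a,b), (b,a)}" by simp
    next
      fix y assume "y \<in> {(a,b), (b,a)}"
      then show "y \<in> {y \<in> S. h y = P}" using ab unfolding S_def h_def by auto
    qed
    then show ?thesis using ne by simp
  qed
  have "(\<Sum>x\<in>S. ?G (h x)) = (\<Sum>P\<in>h ` S. \<Sum>y \<in> {y \<in> S. h y = P}. ?G (h y))"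
    using sum.image_gen[OF finS, of "\<lambda>x. ?G (h x)" h] .
  also have "\<dots> = (\<Sum>P\<in>h ` S. 2 * ?G P)"
  proof (rule sum.cong[OF refl])
    fix P assume P: "P \<in> h ` S"
    have "(\<Sum>y \<in> {y \<in> S. h y = P}. ?G (h y)) = (\<Sum>y \<in> {y \<in> S. h y = P}. ?G P)" by simp
    also have "\<dots> = 2 * ?G P" using fib[OF P] by simp
    finally show "(\<Sum>y \<in> {y \<in> S. h y = P}. ?G (h y)) = 2 * ?G P" .
  qed
  finally have e1: "(\<Sum>x\<in>S. ?G (h x)) = 2 * (\<Sum>P\<in>h ` S. ?G P)" by (simp add: sum_distrib_left)
  have "(\<Sum>x\<in>S. ?G (h x)) = (\<Sum>x\<in>S. int (A_C N + w (fst x) (snd x) + w (snd x) (fst x)))"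
  proof (rule sum.cong[OF refl])
    fix x assume "x \<in> S"
    then have "fst x \<in> T" "snd x \<in> T" "fst x \<noteq> snd x" unfolding S_def by auto
    then show "?G (h x) = int (A_C N + w (fst x) (snd x) + w (snd x) (fst x))"
      unfolding h_def using pairval[of "fst x" "snd x"] by simp
  qed
  also have "\<dots> = (int (card T)^2 + 3 * int (card T) - 2) * int (A_C N) - 2 * int (card T)"
    unfolding S_def by (rule total)
  finally have e2: "2 * (\<Sum>P\<in>h ` S. ?G P) = (int (card T)^2 + 3 * int (card T) - 2) * int (A_C N) - 2 * int (card T)"
    using e1 by simp
  have "2 * (\<Sum>P\<in>h ` S. ?G P) = 2 * ((2 * int n ^ 2 + int n - 2) * int (A_C N) - (2 * int n - 1))"
    unfolding e2 mTi by (simp add: power2_eq_square algebra_simps)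
  then have "(\<Sum>P\<in>h ` S. ?G P) = (2 * int n ^ 2 + int n - 2) * int (A_C N) - (2 * int n - 1)" by simp
  then show ?thesis unfolding Peq by simp
qed

end
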